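(* Let $w\in\mathcal S_n$ and $a\in\mathrm R(w)$ with $a\notin[a_{\min}]$. Then there exists $b\in\mathrm R(w)$ such that $[b]$ and $[a]$ are adjacent in $C(w)$ (some word of $[b]$ and some word of $[a]$ differ by a single long braid relation) and $\mathrm{sup}(b)\subsetneq\mathrm{sup}(a)$. Similarly, if $a\notin[a_{\max}]$, there exists $b\in\mathrm R(w)$ with $[b]$ adjacent to $[a]$ in $C(w)$ and $\mathrm{sup}(a)\subsetneq\mathrm{sup}(b)$.
   Context: Permutations are in one-line notation; $\mathrm{Des}(u)=\{i:u_i>u_{i+1}\}$. A word $a=a_1\cdots a_\ell$ with letters in $\{1,\dots,n-1\}$ acts on a word of length $n$ by successively swapping the entries in positions $a_j$ and $a_j+1$. $\mathrm R(w)$: reduced words of $w$ (length $\ell(w)$ = number of inversions, action on $12\cdots n$ yields $w$). Commutation: replace a factor $ij$, $|i-j|\ge2$, by $ji$; long braid relation: replace $i(i+1)i$ by $(i+1)i(i+1)$ or vice versa; $[a]$ is the commutation class of $a$. $C(w)$: vertices are commutation classes, $[a]\ne[b]$ adjacent if some $a'\in[a]$, $b'\in[b]$ differ by one long braid relation. $a_{\min}$ (resp. $a_{\max}$): set $w^0=w$, for $j=0,\dots,\ell(w)-1$ let $i_j$ be the smallest (resp. largest) element of $\mathrm{Des}(w^j)$ and obtain $w^{j+1}$ by swapping the entries in positions $i_j,i_j+1$ of $w^j$; the word is $i_{\ell(w)-1}\cdots i_0$. For an inversion $(p,q)$ of $w$, $P_a(p,q)$ is the index of the step of $a$ swapping $p$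 and $q$. $\mathrm T_w$: triples $(x,y,z)$, $x<y<z$, with $z,y,x$ in this order in $w$. $\Gamma(a,(x,y,z))=1$ if $P_a(y,x)>P_a(z,y)$, else $0$. $\mathrm{sup}(a)=\{t\in\mathrm T_w:\Gamma(a,t)=1\}$. *)

theory Defs
  imports Main
begin

text \<open>Permutations of [n] in one-line notation are lists of length n
  containing each of 1..n exactly once. Positions are 1-indexed as in the paper.\<close>

definition is_perm :: "nat \<Rightarrow> nat list \<Rightarrow> bool" where
  "is_perm n w \<longleftrightarrow> length w = n \<and> distinct w \<and> set w = {1..n}"

definition id_perm :: "nat \<Rightarrow> nat list" where
  "id_perm n = [1..<n+1]"

text \<open>Swap the entries in (1-indexed) positions i and i+1.\<close>
definition swap_at :: "nat \<Rightarrow> nat list \<Rightarrow> nat list" where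
  "swap_at i u = u[i - 1 := u ! i, i := u ! (i - 1)]"

definition act :: "nat list \<Rightarrow> nat list \<Rightarrow> nat list" where
  "act a u = fold swap_at a u"

definition inv_count :: "nat list \<Rightarrow> nat" where
  "inv_count w = card {(i, j). i < j \<and> j < length w \<and> w ! i > w ! j}"

definition Des :: "nat list \<Rightarrow> nat set" where
  "Des u = {i. 1 \<le> i \<and> i < length u \<and> u ! (i - 1) > u ! i}"

definition reduced_words :: "nat list \<Rightarrow> nat list set" where
  "reduced_words w = {a. length a = inv_count w \<and> set a \<subseteq> {1..length w - 1}
                        \<and> act a (id_perm (length w)) = w}"

definition comm_step :: "nat list \<Rightarrow> nat list \<Rightarrow> bool" where
  "comm_step a b \<longleftrightarrow> (\<exists>xs i j ys. a = xs @ [i, j] @ ys \<and> b = xs @ [j, i] @ ys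
                          \<and> (i + 2 \<le> j \<or> j + 2 \<le> i))"

definition comm_class :: "nat list \<Rightarrow> nat list set" where
  "comm_class a = {b. (a, b) \<in> {(x, y). comm_step x y}\<^sup>*}"

definition braid_step :: "nat list \<Rightarrow> nat list \<Rightarrow> bool" where
  "braid_step a b \<longleftrightarrow> (\<exists>xs i ys.
      (a = xs @ [i, i + 1, i] @ ys \<and> b = xs @ [i + 1, i, i + 1] @ ys)
    \<or> (a = xs @ [i + 1, i, i + 1] @ ys \<and> b = xs @ [i, i + 1, i] @ ys))"

definition adjacent_classes :: "nat list \<Rightarrow> nat list \<Rightarrow> bool" where
  "adjacent_classes a b \<longleftrightarrow> comm_class a \<noteq> comm_class b \<and>
     (\<exists>a' \<in> comm_class a. \<exists>b' \<in> comm_class b. braid_step a' b')"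

fun min_steps :: "nat \<Rightarrow> nat list \<Rightarrow> nat list" where
  "min_steps 0 u = []"
| "min_steps (Suc k) u = (let i = Min (Des u) in i # min_steps k (swap_at i u))"

fun max_steps :: "nat \<Rightarrow> nat list \<Rightarrow> nat list" where
  "max_steps 0 u = []"
| "max_steps (Suc k) u = (let i = Max (Des u) in i # max_steps k (swap_at i u))"

definition a_min :: "nat list \<Rightarrow> nat list" where
  "a_min w = rev (min_steps (inv_count w) w)"

definition a_max :: "nat list \<Rightarrow> nat list" where
  "a_max w = rev (max_steps (inv_count w) w)"

text \<open>P_a(p,q): the (1-indexed) step of a (acting on 12...n) that swaps the values p and q.\<close>
definition P_step :: "nat \<Rightarrow> nat list \<Rightarrow> nat \<Rightarrow> nat \<Rightarrow> nat" where
  "P_step n a p q = (LEAST j. 1 \<le> j \<and> j \<le> length a \<and>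
      (let u = act (take (j - 1) a) (id_perm n); k = a ! (j - 1)
       in {u ! (k - 1), u ! k} = {p, q}))"

definition triples :: "nat list \<Rightarrow> (nat \<times> nat \<times> nat) set" where
  "triples w = {(x, y, z). x < y \<and> y < z \<and>
      (\<exists>i j k. i < j \<and> j < k \<and> k < length w \<and> w ! i = z \<and> w ! j = y \<and> w ! k = x)}"

definition Gamma :: "nat \<Rightarrow> nat list \<Rightarrow> nat \<times> nat \<times> nat \<Rightarrow> bool" where
  "Gamma n a t = (case t of (x, y, z) \<Rightarrow> P_step n a y x > P_step n a z y)"

definition sup_set :: "nat list \<Rightarrow> nat list \<Rightarrow> (nat \<times> nat \<times> nat) set" where
  "sup_set w a = {t \<in> triples w. Gamma (length w) a t}"

end

theory Submission
  imports Defs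
begin

definition before :: "'a list \<Rightarrow> 'a \<Rightarrow> 'a \<Rightarrow> bool" where
  "before u P Q \<longleftrightarrow> (\<exists>i j. i < j \<and> j < length u \<and> u ! i = P \<and> u ! j = Q)"

definition sw :: "nat \<Rightarrow> 'a list \<Rightarrow> 'a list" where
  "sw k u = u[k - 1 := u ! k, k := u ! (k - 1)]"

lemma swap_at_sw: "swap_at k u = sw k u" by (simp add: swap_at_def sw_def)

lemma length_sw[simp]: "length (sw k u) = length u"
  by (simp add: sw_def)

lemma sw_nth:
  assumes "1 \<le> k" "k < length u" "i < length u"
  shows "sw k u ! i = (if i = k - 1 then u ! k else if i = k then u ! (k - 1) else u ! i)"
  using assms by (auto simp: sw_def nth_list_update)

lemma sw_sw: "1 \<le> k \<Longrightarrow> k < length u \<Longrightarrow> sw k (sw k u) = u"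
  by (rule nth_equalityI) (auto simp: sw_nth)

lemma sw_app: "sw (Suc (length A)) (A @ x # y # B) = A @ y # x # B"
  by (simp add: sw_def nth_append list_update_append)

lemma length_swap[simp]: "length (swap_at k u) = length u"
  by (simp add: swap_at_def)

lemma swap_nth:
  assumes "1 \<le> k" "k < length u" "i < length u"
  shows "swap_at k u ! i = (if i = k - 1 then u ! k else if i = k then u ! (k - 1) else u ! i)"
  using assms by (auto simp: swap_at_def nth_list_update)

lemma distinct_swap_at[simp]: "1 \<le> k \<Longrightarrow> k < length u \<Longrightarrow> distinct (swap_at k u) = distinct u"
  by (simp add: swap_at_def)

lemma set_swap_at[simp]: "1 \<le> k \<Longrightarrow> k < length u \<Longrightarrow> set (swap_at k u) = set u"
  by (simp add: swap_at_def)

lemma swap_swap: "1 \<le> k \<Longrightarrow> k < length u \<Longrightarrow> swap_at k (swap_at k u) = u"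
  by (rule nth_equalityI) (auto simp: swap_nth)

lemma swap_comm:
  assumes "1 \<le> i" "i < length u" "1 \<le> j" "j < length u" "i + 2 \<le> j \<or> j + 2 \<le> i"
  shows "swap_at i (swap_at j u) = swap_at j (swap_at i u)"
  using assms by (intro nth_equalityI) (auto simp: swap_nth)

lemma swap_braid:
  assumes "1 \<le> i" "i + 1 < length u"
  shows "swap_at (i+1) (swap_at i (swap_at (i+1) u)) = swap_at i (swap_at (i+1) (swap_at i u))"
  using assms by (intro nth_equalityI) (auto simp: swap_nth)

lemma swap_app: "swap_at (Suc (length A)) (A @ x # y # B) = A @ y # x # B"
  by (simp add: swap_at_def nth_append list_update_append)

lemma act_Nil[simp]: "act [] u = u" by (simp add: act_def)
lemma act_Cons[simp]: "act (k # ks) u = act ks (swap_at k u)" by (simp add: act_def)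
lemma act_append[simp]: "act (xs @ ys) u = act ys (act xs u)" by (simp add: act_def)
lemma length_act[simp]: "length (act a u) = length u"
  by (induction a arbitrary: u) auto

definition valid :: "nat \<Rightarrow> nat list \<Rightarrow> bool" where
  "valid n a \<longleftrightarrow> (\<forall>k\<in>set a. 1 \<le> k \<and> k < n)"

lemma valid_simps[simp]: "valid n [] " "valid n (k # ks) \<longleftrightarrow> 1 \<le> k \<and> k < n \<and> valid n ks"
  "valid n (xs @ ys) \<longleftrightarrow> valid n xs \<and> valid n ys"
  by (auto simp: valid_def)

lemma distinct_act: "valid (length u) a \<Longrightarrow> distinct (act a u) = distinct u"
  by (induction a arbitrary: u) auto

lemma before_swap_aux:
  assumes "1 \<le> k" "k < length u" "{P, Q} \<noteq> {u ! (k - 1), u ! k}" "before (sw k u) P Q"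
  shows "before u P Q"
proof -
  obtain i j where ij: "i < j" "j < length u" "sw k u ! i = P" "sw k u ! j = Q"
    using assms(4) by (auto simp: before_def)
  define s where "s = (\<lambda>i. if i = k - 1 then k else if i = k then k - 1 else i)"
  have e: "sw k u ! m = u ! s m" if "m < length u" for m
    using sw_nth[OF assms(1,2) that] assms by (auto simp: s_def)
  have "\<not> (i = k - 1 \<and> j = k)" using ij assms(3) e by (auto simp: s_def)
  hence "s i < s j" using ij assms(1,2) by (auto simp: s_def)
  moreover have "s j < length u" using ij assms(1,2) by (auto simp: s_def)
  moreover have "u ! s i = P" "u ! s j = Q" using ij e[of i] e[of j] by auto
  ultimately show ?thesis unfolding before_def by blast
qed

lemma before_swap:
  assumes "1 \<le> k" "k < length u" "{P, Q} \<noteq> {u ! (k - 1), u ! k}"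
  shows "before (sw k u) P Q = before u P Q"
proof
  assume "before (sw k u) P Q" thus "before u P Q" using before_swap_aux[OF assms] by blast
next
  assume b: "before u P Q"
  have n: "sw k u ! (k - 1) = u ! k" "sw k u ! k = u ! (k - 1)"
    using sw_nth[OF assms(1,2), of "k - 1"] sw_nth[OF assms(1,2), of k] assms(1,2) by auto
  have "{sw k u ! (k - 1), sw k u ! k} = {u ! (k - 1), u ! k}" unfolding n by blast
  hence "{P, Q} \<noteq> {sw k u ! (k - 1), sw k u ! k}" using assms(3) by simp
  moreover have "1 \<le> k" "k < length (sw k u)" using assms by auto
  ultimately have "before (sw k (sw k u)) P Q \<Longrightarrow> before (sw k u) P Q"
    using before_swap_aux[of k "sw k u" P Q] by blast
  moreover have "sw k (sw k u) = u" using sw_sw assms(1,2) by blast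
  ultimately show "before (sw k u) P Q" using b by simp
qed

lemma before_antisym: "distinct u \<Longrightarrow> before u P Q \<Longrightarrow> \<not> before u Q P"
  unfolding before_def by (metis nth_eq_iff_index_eq order.strict_trans not_less_iff_gr_or_eq)

lemma before_swapped: "1 \<le> k \<Longrightarrow> k < length u \<Longrightarrow> before (sw k u) (u ! k) (u ! (k - 1))"
  unfolding before_def by (rule exI[of _ "k - 1"], rule exI[of _ k]) (auto simp: sw_nth)

lemma before_swap_at:
  "1 \<le> k \<Longrightarrow> k < length u \<Longrightarrow> {P, Q} \<noteq> {u ! (k - 1), u ! k} \<Longrightarrow> before (swap_at k u) P Q = before u P Q"
  unfolding swap_at_sw by (rule before_swap)

lemma before_swapped_at: "1 \<le> k \<Longrightarrow> k < length u \<Longrightarrow> before (swap_at k u) (u ! k) (u ! (k - 1))"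
  unfolding swap_at_sw by (rule before_swapped)

definition Inv :: "nat list \<Rightarrow> (nat \<times> nat) set" where
  "Inv w = {(i, j). i < j \<and> j < length w \<and> w ! i > w ! j}"

lemma inv_count_Inv: "inv_count w = card (Inv w)" by (simp add: inv_count_def Inv_def)

lemma finite_Inv[simp]: "finite (Inv w)"
  by (rule finite_subset[of _ "{..<length w} \<times> {..<length w}"]) (auto simp: Inv_def)

lemma Inv_swap_card:
  assumes k: "1 \<le> k" "k < length u"
  shows "card (Inv (swap_at k u) - {(k - 1, k)}) = card (Inv u - {(k - 1, k)})"
proof -
  define s where "s = (\<lambda>i. if i = k - 1 then k else if i = k then k - 1 else i)"
  have e: "swap_at k u ! m = u ! s m" if "m < length u" for m
    using swap_nth[OF k that] k by (auto simp: s_def)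
  have ss: "s (s i) = i" for i using k by (auto simp: s_def)
  have sl: "i < length u \<Longrightarrow> s i < length u" for i using k by (auto simp: s_def)
  have mono: "i < j \<Longrightarrow> \<not> (i = k - 1 \<and> j = k) \<Longrightarrow> s i < s j" for i j
    using k by (auto simp: s_def)
  have pair: "s i = k - 1 \<and> s j = k \<longleftrightarrow> i = k \<and> j = k - 1" for i j
    using k by (auto simp: s_def)
  let ?f = "\<lambda>(i, j). (s i, s j)"
  have inj: "inj_on ?f X" for X
    by (rule inj_on_inverseI[where g="?f"]) (auto simp: ss)
  have img: "?f ` (Inv (swap_at k u) - {(k - 1, k)}) = Inv u - {(k - 1, k)}"
  proof (rule set_eqI, rule iffI)
    fix x assume "x \<in> ?f ` (Inv (swap_at k u) - {(k - 1, k)})"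
    then obtain i j where x: "x = (s i, s j)" and ij: "i < j" "j < length u"
        "swap_at k u ! i > swap_at k u ! j" "(i, j) \<noteq> (k - 1, k)"
      by (auto simp: Inv_def)
    thus "x \<in> Inv u - {(k - 1, k)}"
      using mono[of i j] sl[of j] e[of i] e[of j] pair[of i j] by (auto simp: Inv_def)
  next
    fix x assume "x \<in> Inv u - {(k - 1, k)}"
    then obtain i j where x: "x = (i, j)" and ij: "i < j" "j < length u"
        "u ! i > u ! j" "(i, j) \<noteq> (k - 1, k)"
      by (auto simp: Inv_def)
    have "s i < s j" using mono[of i j] ij by auto
    moreover have "(s i, s j) \<noteq> (k - 1, k)" using pair[of i j] ij by auto
    moreover have "s j < length u" using sl ij by auto
    ultimately have "(s i, s j) \<in> Inv (swap_at k u) - {(k - 1, k)}"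
      using e[of "s i"] e[of "s j"] ss ij by (auto simp: Inv_def)
    moreover have "x = ?f (s i, s j)" using x ss by simp
    ultimately show "x \<in> ?f ` (Inv (swap_at k u) - {(k - 1, k)})" by blast
  qed
  show ?thesis using card_image[OF inj, of "Inv (swap_at k u) - {(k - 1, k)}"] img by simp
qed

lemma card_split: "finite A \<Longrightarrow> card A = card (A - {x}) + (if x \<in> A then 1 else 0)"
  using card.remove[of A x] by (cases "x \<in> A") auto

lemma inv_swap:
  assumes k: "1 \<le> k" "k < length u" and d: "distinct u"
  shows "u ! (k - 1) < u ! k \<Longrightarrow> inv_count (swap_at k u) = inv_count u + 1"
    and "\<not> u ! (k - 1) < u ! k \<Longrightarrow> inv_count (swap_at k u) + 1 = inv_count u"
proof -
  have ne: "u ! (k - 1) \<noteq> u ! k" using d k by (simp add: nth_eq_iff_index_eq)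
  have m1: "(k - 1, k) \<in> Inv (swap_at k u) \<longleftrightarrow> u ! (k - 1) < u ! k"
    using k by (auto simp: Inv_def swap_nth)
  have m2: "(k - 1, k) \<in> Inv u \<longleftrightarrow> u ! (k - 1) > u ! k"
    using k by (auto simp: Inv_def)
  have c1: "card (Inv (swap_at k u)) = card (Inv (swap_at k u) - {(k - 1, k)}) + (if u ! (k - 1) < u ! k then 1 else 0)"
    using card_split[OF finite_Inv, of "swap_at k u" "(k - 1, k)"] m1 by presburger
  have c2: "card (Inv u) = card (Inv u - {(k - 1, k)}) + (if u ! (k - 1) > u ! k then 1 else 0)"
    using card_split[OF finite_Inv, of u "(k - 1, k)"] m2 by presburger
  note c3 = Inv_swap_card[OF k]
  show "u ! (k - 1) < u ! k \<Longrightarrow> inv_count (swap_at k u) = inv_count u + 1"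
    unfolding inv_count_Inv using c1 c2 c3 by auto
  show "\<not> u ! (k - 1) < u ! k \<Longrightarrow> inv_count (swap_at k u) + 1 = inv_count u"
    unfolding inv_count_Inv using c1 c2 c3 ne by auto
qed

fun all_asc :: "nat list \<Rightarrow> nat list \<Rightarrow> bool" where
  "all_asc [] u = True"
| "all_asc (k # ks) u = (u ! (k - 1) < u ! k \<and> all_asc ks (swap_at k u))"

lemma all_asc_append[simp]: "all_asc (xs @ ys) u = (all_asc xs u \<and> all_asc ys (act xs u))"
  by (induction xs arbitrary: u) auto

lemma inv_act:
  assumes "valid (length u) a" "distinct u"
  shows "inv_count (act a u) \<le> inv_count u + length a
     \<and> (inv_count (act a u) = inv_count u + length a \<longleftrightarrow> all_asc a u)"
  using assms
proof (induction a arbitrary: u)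
  case Nil thus ?case by simp
next
  case (Cons k ks)
  have k: "1 \<le> k" "k < length u" and v: "valid (length (swap_at k u)) ks" using Cons.prems by auto
  have d: "distinct (swap_at k u)" using Cons.prems k by simp
  note IH = Cons.IH[OF v d]
  show ?case
  proof (cases "u ! (k - 1) < u ! k")
    case True thus ?thesis using IH inv_swap(1)[OF k Cons.prems(2)] by simp
  next
    case False thus ?thesis using IH inv_swap(2)[OF k Cons.prems(2)] by simp
  qed
qed

lemma id_perm_props[simp]: "length (id_perm n) = n" "distinct (id_perm n)"
  "i < n \<Longrightarrow> id_perm n ! i = Suc i"
  by (auto simp: id_perm_def nth_upt simp del: upt_Suc)

lemma inv_id[simp]: "inv_count (id_perm n) = 0"
proof -
  have "Inv (id_perm n) = {}" by (auto simp: Inv_def)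
  thus ?thesis by (simp add: inv_count_Inv)
qed

definition red :: "nat \<Rightarrow> nat list \<Rightarrow> bool" where
  "red n a \<longleftrightarrow> valid n a \<and> all_asc a (id_perm n)"

lemma red_iff: "red n a \<longleftrightarrow> valid n a \<and> inv_count (act a (id_perm n)) = length a"
  using inv_act[of "id_perm n" a] by (auto simp: red_def)

lemma R_iff: "length w = n \<Longrightarrow> a \<in> reduced_words w \<longleftrightarrow> red n a \<and> act a (id_perm n) = w"
  unfolding red_iff reduced_words_def valid_def by (auto simp: subset_iff)

fun pl :: "nat list \<Rightarrow> nat list \<Rightarrow> nat set list" where
  "pl [] u = []"
| "pl (k # ks) u = {u ! (k - 1), u ! k} # pl ks (swap_at k u)"

lemma pl_append[simp]: "pl (xs @ ys) u = pl xs u @ pl ys (act xs u)"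
  by (induction xs arbitrary: u) auto

lemma length_pl[simp]: "length (pl a u) = length a"
  by (induction a arbitrary: u) auto

lemma pl_nth: "j < length a \<Longrightarrow> pl a u ! j = {act (take j a) u ! (a ! j - 1), act (take j a) u ! (a ! j)}"
proof (induction a arbitrary: u j)
  case Nil thus ?case by simp
next
  case (Cons k ks) thus ?case by (cases j) auto
qed

lemma asc_step_keeps:
  assumes k: "1 \<le> k" "k < length u" and d: "distinct u" and asc: "u ! (k - 1) < u ! k"
    and pq: "p < q" and b: "before u q p"
  shows "{u ! (k - 1), u ! k} \<noteq> {p, q}" and "before (swap_at k u) q p"
proof -
  show ne: "{u ! (k - 1), u ! k} \<noteq> {p, q}"
  proof
    assume "{u ! (k - 1), u ! k} = {p, q}"
    hence "u ! (k - 1) = p" "u ! k = q" using asc pq by (auto simp: doubleton_eq_iff)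
    hence "before u p q" unfolding before_def using k
      by (intro exI[of _ "k - 1"] exI[of _ k]) auto
    thus False using before_antisym[OF d] b by blast
  qed
  show "before (swap_at k u) q p"
    using before_swap_at[OF k, of q p] ne b by (auto simp: insert_commute)
qed

lemma act_keeps:
  assumes "all_asc a u" "distinct u" "valid (length u) a" "p < q" "before u q p"
  shows "before (act a u) q p"
  using assms
proof (induction a arbitrary: u)
  case Nil thus ?case by simp
next
  case (Cons k ks)
  have k: "1 \<le> k" "k < length u" using Cons.prems by auto
  show ?case using Cons.prems asc_step_keeps[OF k, of p q] Cons.IH[of "swap_at k u"] k by auto
qed

lemma pl_absent_keeps:
  assumes "all_asc a u" "distinct u" "valid (length u) a" "p < q" "before u q p"
  shows "{p, q} \<notin> set (pl a u)"
  using assms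
proof (induction a arbitrary: u)
  case Nil thus ?case by simp
next
  case (Cons k ks)
  have k: "1 \<le> k" "k < length u" using Cons.prems by auto
  show ?case using Cons.prems asc_step_keeps[OF k, of p q] Cons.IH[of "swap_at k u"] k by auto
qed

lemma distinct_pl:
  assumes "all_asc a u" "distinct u" "valid (length u) a"
  shows "distinct (pl a u)"
  using assms
proof (induction a arbitrary: u)
  case Nil thus ?case by simp
next
  case (Cons k ks)
  have k: "1 \<le> k" "k < length u" using Cons.prems by auto
  have asc: "u ! (k - 1) < u ! k" and aa: "all_asc ks (swap_at k u)" using Cons.prems by auto
  have "{u ! (k - 1), u ! k} \<notin> set (pl ks (swap_at k u))"
    using pl_absent_keeps[OF aa _ _ asc before_swapped_at[OF k]] Cons.prems k by auto
  thus ?case using Cons.IH[OF aa] Cons.prems k by auto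
qed

lemma pl_unswapped_keeps:
  assumes "valid (length u) a" "{p, q} \<notin> set (pl a u)"
  shows "before (act a u) p q = before u p q"
  using assms
proof (induction a arbitrary: u)
  case Nil thus ?case by simp
next
  case (Cons k ks)
  have k: "1 \<le> k" "k < length u" using Cons.prems by auto
  have "{p, q} \<noteq> {u ! (k - 1), u ! k}" using Cons.prems by auto
  thus ?case using Cons.prems Cons.IH[of "swap_at k u"] before_swap_at[OF k] k by auto
qed

definition Pof :: "'a list \<Rightarrow> 'a \<Rightarrow> nat" where
  "Pof L S = (LEAST j. 1 \<le> j \<and> j \<le> length L \<and> L ! (j - 1) = S)"

lemma P_step_Pof: "P_step n a p q = Pof (pl a (id_perm n)) {p, q}"
proof -
  have eq: "(1 \<le> j \<and> j \<le> length a \<and>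
      (let u = act (take (j - 1) a) (id_perm n); k = a ! (j - 1)
       in {u ! (k - 1), u ! k} = {p, q})) = (1 \<le> j \<and> j \<le> length (pl a (id_perm n)) \<and> pl a (id_perm n) ! (j - 1) = {p, q})" for j
  proof (cases "1 \<le> j \<and> j \<le> length a")
    case True
    hence "j - 1 < length a" by auto
    from pl_nth[OF this, of "id_perm n"] True show ?thesis by (simp add: Let_def)
  next
    case False thus ?thesis by auto
  qed
  show ?thesis unfolding P_step_def Pof_def by (simp only: eq)
qed

lemma Pof_nth: assumes "distinct L" "i < length L" shows "Pof L (L ! i) = Suc i"
  unfolding Pof_def
proof (rule Least_equality)
  show "1 \<le> Suc i \<and> Suc i \<le> length L \<and> L ! (Suc i - 1) = L ! i" using assms by auto
next
  fix y assume h: "1 \<le> y \<and> y \<le> length L \<and> L ! (y - 1) = L ! i"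
  hence "y - 1 = i" using assms nth_eq_iff_index_eq[of L "y - 1" i] by auto
  thus "Suc i \<le> y" using h by auto
qed

lemma Pof_before:
  assumes "distinct L" "S \<in> set L" "T \<in> set L"
  shows "Pof L S < Pof L T \<longleftrightarrow> before L S T"
proof -
  obtain i j where "i < length L" "j < length L" "L ! i = S" "L ! j = T"
    using assms by (auto simp: in_set_conv_nth)
  moreover have "before L (L ! i) (L ! j) \<longleftrightarrow> i < j" if "i < length L" "j < length L" for i j
    using that assms(1) unfolding before_def by (auto simp: nth_eq_iff_index_eq)
  ultimately show ?thesis using Pof_nth[OF assms(1)] by auto
qed

lemma before_id: "before (id_perm n) q p \<Longrightarrow> q < p"
  unfolding before_def by auto

lemma sup_char:
  assumes r: "red n a" and w: "w = act a (id_perm n)"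
  shows "sup_set w a = {(x, y, z). (x, y, z) \<in> triples w \<and> before (pl a (id_perm n)) {z, y} {y, x}}"
proof -
  let ?L = "pl a (id_perm n)"
  have v: "valid (length (id_perm n)) a" and aa: "all_asc a (id_perm n)" using r by (auto simp: red_def)
  have dL: "distinct ?L" using distinct_pl[OF aa _ v] by simp
  have lw: "length w = n" using w by simp
  have pres: "{p, q} \<in> set ?L" if "p < q" "before w q p" for p q
  proof (rule ccontr)
    assume "{p, q} \<notin> set ?L"
    hence "before w q p = before (id_perm n) q p" using pl_unswapped_keeps[OF v, of q p] w
      by (auto simp: insert_commute)
    thus False using that before_id by fastforce
  qed
  have "Gamma (length w) a (x, y, z) \<longleftrightarrow> before ?L {z, y} {y, x}" if t: "(x, y, z) \<in> triples w" for x y z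
  proof -
    obtain i j k where ijk: "x < y" "y < z" "i < j" "j < k" "k < length w" "w ! i = z" "w ! j = y" "w ! k = x"
      using t by (auto simp: triples_def)
    have "before w y x" unfolding before_def using ijk by blast
    hence p1: "{y, x} \<in> set ?L" using pres[of x y] ijk by (auto simp: insert_commute)
    have "before w z y" unfolding before_def using ijk by (metis less_trans)
    hence p2: "{z, y} \<in> set ?L" using pres[of y z] ijk by (auto simp: insert_commute)
    show ?thesis unfolding Gamma_def using Pof_before[OF dL p2 p1] lw by (simp add: P_step_Pof)
  qed
  thus ?thesis unfolding sup_set_def by auto
qed

lemma cc_refl[simp]: "a \<in> comm_class a" by (simp add: comm_class_def)

lemma cc_trans: "b \<in> comm_class a \<Longrightarrow> c \<in> comm_class b \<Longrightarrow> c \<in> comm_class a"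
  unfolding comm_class_def by (auto elim: rtrancl_trans)

lemma comm_step_sym: "comm_step a b \<Longrightarrow> comm_step b a"
  unfolding comm_step_def by blast

lemma cc_sym: "b \<in> comm_class a \<Longrightarrow> a \<in> comm_class b"
proof -
  assume "b \<in> comm_class a"
  hence "(a, b) \<in> {(x, y). comm_step x y}\<^sup>*" by (simp add: comm_class_def)
  hence "(b, a) \<in> {(x, y). comm_step x y}\<^sup>*"
  proof (induction rule: rtrancl_induct)
    case base thus ?case by simp
  next
    case (step y z)
    hence "(z, y) \<in> {(x, y). comm_step x y}" using comm_step_sym by auto
    thus ?case using step.IH by (rule converse_rtrancl_into_rtrancl)
  qed
  thus ?thesis by (simp add: comm_class_def)
qed

lemma comm_step_append: "comm_step a b \<Longrightarrow> comm_step (a @ c) (b @ c)"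
  unfolding comm_step_def by (metis append.assoc)

lemma cc_append: "b \<in> comm_class a \<Longrightarrow> b @ c \<in> comm_class (a @ c)"
proof -
  assume "b \<in> comm_class a"
  hence "(a, b) \<in> {(x, y). comm_step x y}\<^sup>*" by (simp add: comm_class_def)
  hence "(a @ c, b @ c) \<in> {(x, y). comm_step x y}\<^sup>*"
  proof (induction rule: rtrancl_induct)
    case base thus ?case by simp
  next
    case (step y z)
    hence "(y @ c, z @ c) \<in> {(x, y). comm_step x y}" using comm_step_append by auto
    with step.IH show ?case by (rule rtrancl_into_rtrancl)
  qed
  thus ?thesis by (simp add: comm_class_def)
qed

lemma cc_swap: "i + 2 \<le> j \<or> j + 2 \<le> i \<Longrightarrow> c @ [j, i] \<in> comm_class (c @ [i, j])"
proof -
  assume h: "i + 2 \<le> j \<or> j + 2 \<le> i"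
  have "comm_step (c @ [i, j]) (c @ [j, i])" unfolding comm_step_def
    using h by (intro exI[of _ c] exI[of _ i] exI[of _ j] exI[of _ "[]"]) auto
  thus ?thesis by (auto simp: comm_class_def)
qed

lemma comm_step_inv:
  assumes cs: "comm_step a b" and r: "red n a"
  shows "red n b \<and> act b (id_perm n) = act a (id_perm n)
     \<and> sup_set (act a (id_perm n)) b = sup_set (act a (id_perm n)) a"
proof -
  obtain xs i j ys where ab: "a = xs @ [i, j] @ ys" "b = xs @ [j, i] @ ys" and ij: "i + 2 \<le> j \<or> j + 2 \<le> i"
    using cs unfolding comm_step_def by blast
  have va: "valid n a" using r by (simp add: red_def)
  hence vb: "valid n b" using ab by auto
  have iv: "1 \<le> i" "i < n" "1 \<le> j" "j < n" using va ab by auto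
  define u1 where "u1 = act xs (id_perm n)"
  have lu1: "length u1 = n" by (simp add: u1_def)
  have du1: "distinct u1" unfolding u1_def using va ab by (subst distinct_act) auto
  have sc: "swap_at i (swap_at j u1) = swap_at j (swap_at i u1)" using swap_comm[of i u1 j] iv ij lu1 by auto
  have actb: "act b (id_perm n) = act a (id_perm n)" using ab sc by (simp add: u1_def)
  have rb: "red n b" using r vb actb ab by (simp add: red_iff)
  let ?w = "act a (id_perm n)"
  define S1 where "S1 = {u1 ! (i - 1), u1 ! i}"
  define S2 where "S2 = {u1 ! (j - 1), u1 ! j}"
  have n1: "swap_at i u1 ! (j - 1) = u1 ! (j - 1)" "swap_at i u1 ! j = u1 ! j"
    using swap_nth[of i u1] iv ij lu1 by auto
  have n2: "swap_at j u1 ! (i - 1) = u1 ! (i - 1)" "swap_at j u1 ! i = u1 ! i"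
    using swap_nth[of j u1] iv ij lu1 by auto
  define B where "B = pl ys (act [i, j] u1)"
  have pla: "pl a (id_perm n) = pl xs (id_perm n) @ S1 # S2 # B"
    using ab n1 by (simp add: u1_def[symmetric] S1_def S2_def B_def)
  have plb: "pl b (id_perm n) = pl xs (id_perm n) @ S2 # S1 # B"
    using ab n2 sc by (simp add: u1_def[symmetric] S1_def S2_def B_def)
  have plb2: "pl b (id_perm n) = sw (Suc (length (pl xs (id_perm n)))) (pl a (id_perm n))"
    unfolding pla plb by (rule sw_app[symmetric])
  have disj: "S1 \<inter> S2 = {}"
    unfolding S1_def S2_def using du1 lu1 iv ij by (auto simp: nth_eq_iff_index_eq)
  let ?k = "Suc (length (pl xs (id_perm n)))"
  have kk: "1 \<le> ?k" "?k < length (pl a (id_perm n))" using pla by auto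
  have nk: "pl a (id_perm n) ! (?k - 1) = S1" "pl a (id_perm n) ! ?k = S2" using pla by (auto simp: nth_append)
  have "before (pl b (id_perm n)) {z, y} {y, x} = before (pl a (id_perm n)) {z, y} {y, x}" for x y z
  proof -
    have "{{z, y}, {y, x}} \<noteq> {S1, S2}"
    proof
      assume "{{z, y}, {y, x}} = {S1, S2}"
      hence "y \<in> S1" "y \<in> S2" by (auto simp: doubleton_eq_iff)
      thus False using disj by auto
    qed
    thus ?thesis unfolding plb2 using before_swap[OF kk] nk by simp
  qed
  hence "sup_set ?w b = sup_set ?w a"
    unfolding sup_char[OF r refl] sup_char[OF rb actb[symmetric]] by simp
  thus ?thesis using rb actb by simp
qed

lemma cc_inv:
  assumes "b \<in> comm_class a" "red n a"
  shows "red n b \<and> act b (id_perm n) = act a (id_perm n)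
     \<and> sup_set (act a (id_perm n)) b = sup_set (act a (id_perm n)) a"
proof -
  have "(a, b) \<in> {(x, y). comm_step x y}\<^sup>*" using assms(1) by (simp add: comm_class_def)
  thus ?thesis
  proof (induction rule: rtrancl_induct)
    case base thus ?case using assms(2) by simp
  next
    case (step y z)
    hence "comm_step y z" by simp
    from comm_step_inv[OF this, where n=n] step.IH show ?case by simp
  qed
qed

lemma before_mid: "before (A @ S1 # S2 # S3 # B) S1 S3"
  unfolding before_def
  by (intro exI[of _ "length A"] exI[of _ "length A + 2"]) (auto simp: nth_append)

lemma braid_perm3:
  assumes h: "\<not> (X \<in> {S1, S2, S3} \<and> Y \<in> {S1, S2, S3})"
  shows "before (A @ S3 # S2 # S1 # B) X Y = before (A @ S1 # S2 # S3 # B) X Y"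
proof -
  let ?m = "length A"
  have a: "sw (Suc ?m) (A @ S1 # S2 # S3 # B) = A @ S2 # S1 # S3 # B" by (rule sw_app)
  have b: "sw (Suc (length (A @ [S2]))) ((A @ [S2]) @ S1 # S3 # B) = (A @ [S2]) @ S3 # S1 # B" by (rule sw_app)
  have c: "sw (Suc ?m) (A @ S2 # S3 # S1 # B) = A @ S3 # S2 # S1 # B" by (rule sw_app)
  have ne: "{X, Y} \<noteq> {P, Q}" if "P \<in> {S1, S2, S3}" "Q \<in> {S1, S2, S3}" for P Q
    using h that by (auto simp: doubleton_eq_iff)
  have 1: "before (A @ S2 # S1 # S3 # B) X Y = before (A @ S1 # S2 # S3 # B) X Y"
    unfolding a[symmetric] using ne[of S1 S2] by (intro before_swap) (auto simp: nth_append)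
  have 2: "before (A @ S2 # S3 # S1 # B) X Y = before (A @ S2 # S1 # S3 # B) X Y"
    using before_swap[of "Suc (length (A @ [S2]))" "(A @ [S2]) @ S1 # S3 # B" X Y] b ne[of S1 S3]
    by (simp add: nth_append)
  have 3: "before (A @ S3 # S2 # S1 # B) X Y = before (A @ S2 # S3 # S1 # B) X Y"
    unfolding c[symmetric] using ne[of S2 S3] by (intro before_swap) (auto simp: nth_append)
  show ?thesis using 1 2 3 by simp
qed

lemma braid_inv:
  assumes a1: "a1 = xs @ [i + 1, i, i + 1] @ ys" and a2: "a2 = xs @ [i, i + 1, i] @ ys"
    and r: "red n a1 \<or> red n a2"
  shows "red n a1 \<and> red n a2 \<and> act a2 (id_perm n) = act a1 (id_perm n) \<and>
    (\<exists>t. t \<in> sup_set (act a1 (id_perm n)) a1 \<and>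
       sup_set (act a1 (id_perm n)) a2 = sup_set (act a1 (id_perm n)) a1 - {t})"
proof -
  have vv: "valid n a1 = valid n a2" using a1 a2 by auto
  have v: "valid n a1" using r vv by (auto simp: red_def)
  have iv: "1 \<le> i" "i + 1 < n" using v a1 by auto
  define u1 where "u1 = act xs (id_perm n)"
  have lu1: "length u1 = n" by (simp add: u1_def)
  have du1: "distinct u1" unfolding u1_def using v a1 distinct_act[of "id_perm n" xs] by simp
  have br: "act [i + 1, i, i + 1] u1 = act [i, i + 1, i] u1"
    using swap_braid[of i u1] iv lu1 by simp
  have act2: "act a2 (id_perm n) = act a1 (id_perm n)" using a1 a2 br by (simp add: u1_def)
  have r1: "red n a1" and r2: "red n a2"
    using r act2 vv a1 a2 by (auto simp: red_iff)
  define p where "p = u1 ! (i - 1)"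
  define q where "q = u1 ! i"
  define r' where "r' = u1 ! (i + 1)"
  define v1 where "v1 = swap_at (i + 1) u1"
  define v2 where "v2 = swap_at i v1"
  define v3 where "v3 = swap_at (i + 1) v2"
  have lv: "length v1 = n" "length v2 = n" "length v3 = n" by (simp_all add: v1_def v2_def v3_def lu1)
  have v1n: "v1 ! (i - 1) = p" "v1 ! i = r'" "v1 ! (i + 1) = q"
    using iv lu1 by (auto simp: v1_def p_def q_def r'_def swap_nth)
  have v2n: "v2 ! (i - 1) = r'" "v2 ! i = p" "v2 ! (i + 1) = q"
    using iv lv v1n by (auto simp: v2_def swap_nth)
  have v3n: "v3 ! (i - 1) = r'" "v3 ! i = q" "v3 ! (i + 1) = p"
    using iv lv v2n by (auto simp: v3_def swap_nth)
  define w1 where "w1 = swap_at i u1"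
  define w2 where "w2 = swap_at (i + 1) w1"
  have lw: "length w1 = n" "length w2 = n" by (simp_all add: w1_def w2_def lu1)
  have w1n: "w1 ! (i - 1) = q" "w1 ! i = p" "w1 ! (i + 1) = r'"
    using iv lu1 by (auto simp: w1_def p_def q_def r'_def swap_nth)
  have w2n: "w2 ! (i - 1) = q" "w2 ! i = r'" "w2 ! (i + 1) = p"
    using iv lw w1n by (auto simp: w2_def swap_nth)
  have aa1: "all_asc [i + 1, i, i + 1] u1" "all_asc ys (act [i + 1, i, i + 1] u1)"
    using r1 a1 by (auto simp: red_def u1_def)
  have "u1 ! i < u1 ! (i + 1) \<and> v1 ! (i - 1) < v1 ! i \<and> v2 ! i < v2 ! (i + 1)"
    using aa1(1) unfolding v2_def v1_def by simp
  hence ord: "q < r'" "p < r'" "p < q"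
    using v1n v2n by (auto simp: q_def r'_def)
  have v3e: "act [i + 1, i, i + 1] u1 = v3" by (simp add: v3_def v2_def v1_def)
  have "valid (length u1) [i + 1, i, i + 1]" using iv lu1 by simp
  from distinct_act[OF this] have dv3: "distinct v3" using du1 v3e by simp
  define w where "w = act a1 (id_perm n)"
  have wv: "w = act ys v3" using a1 v3e by (simp add: w_def u1_def)
  have vys: "valid (length v3) ys" using v a1 lv by simp
  have aav: "all_asc ys v3" using aa1 v3e by simp
  have "before v3 r' q" unfolding before_def using v3n iv lv
    by (intro exI[of _ "i - 1"] exI[of _ i]) auto
  hence b1: "before w r' q" using act_keeps[OF aav dv3 vys] ord wv by simp
  have "before v3 q p" unfolding before_def using v3n iv lv
    by (intro exI[of _ i] exI[of _ "i + 1"]) auto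
  hence b2: "before w q p" using act_keeps[OF aav dv3 vys] ord wv by simp
  have dw: "distinct w" using dv3 wv distinct_act[OF vys] by simp
  have tri: "(p, q, r') \<in> triples w"
  proof -
    obtain i1 j1 where 1: "i1 < j1" "j1 < length w" "w ! i1 = r'" "w ! j1 = q" using b1 by (auto simp: before_def)
    obtain j2 k2 where 2: "j2 < k2" "k2 < length w" "w ! j2 = q" "w ! k2 = p" using b2 by (auto simp: before_def)
    have "j1 = j2" using 1 2 dw by (metis nth_eq_iff_index_eq order.strict_trans)
    thus ?thesis unfolding triples_def using 1 2 ord by blast
  qed
  define A where "A = pl xs (id_perm n)"
  define B where "B = pl ys v3"
  have "pl [i + 1, i, i + 1] u1 = [{u1 ! i, u1 ! (i + 1)}, {v1 ! (i - 1), v1 ! i}, {v2 ! i, v2 ! (i + 1)}]"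
    by (simp add: v1_def v2_def)
  hence m1: "pl [i + 1, i, i + 1] u1 = [{q, r'}, {p, r'}, {p, q}]"
    using v1n v2n by (simp add: q_def r'_def insert_commute)
  have "pl [i, i + 1, i] u1 = [{u1 ! (i - 1), u1 ! i}, {w1 ! i, w1 ! (i + 1)}, {w2 ! (i - 1), w2 ! i}]"
    by (simp add: w1_def w2_def)
  hence m2: "pl [i, i + 1, i] u1 = [{p, q}, {p, r'}, {q, r'}]"
    using w1n w2n by (simp add: p_def q_def insert_commute)
  have pl1: "pl a1 (id_perm n) = A @ {q, r'} # {p, r'} # {p, q} # B"
    using a1 m1 v3e by (simp add: A_def B_def u1_def[symmetric])
  have pl2: "pl a2 (id_perm n) = A @ {p, q} # {p, r'} # {q, r'} # B"
    using a2 m2 v3e br by (simp add: A_def B_def u1_def[symmetric])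
  have dL2: "distinct (pl a2 (id_perm n))" using r2 distinct_pl[of a2 "id_perm n"] by (simp add: red_def)
  have t1: "(p, q, r') \<in> sup_set w a1"
    unfolding sup_char[OF r1 w_def] using tri pl1 before_mid[of A "{q, r'}" "{p, r'}" "{p, q}" B]
    by (simp add: insert_commute)
  have eq: "sup_set w a2 = sup_set w a1 - {(p, q, r')}"
  proof -
    have "before (pl a2 (id_perm n)) {z, y} {y, x} \<longleftrightarrow>
          before (pl a1 (id_perm n)) {z, y} {y, x} \<and> (x, y, z) \<noteq> (p, q, r')"
      if "(x, y, z) \<in> triples w" for x y z
    proof (cases "(x, y, z) = (p, q, r')")
      case True
      have "before (pl a2 (id_perm n)) {p, q} {q, r'}" using pl2 before_mid by metis
      hence "\<not> before (pl a2 (id_perm n)) {q, r'} {p, q}" using before_antisym[OF dL2] by blast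
      thus ?thesis using True by (simp add: insert_commute)
    next
      case False
      have xyz: "x < y" "y < z" using that by (auto simp: triples_def)
      have "\<not> ({z, y} \<in> {{q, r'}, {p, r'}, {p, q}} \<and> {y, x} \<in> {{q, r'}, {p, r'}, {p, q}})"
      proof
        assume "{z, y} \<in> {{q, r'}, {p, r'}, {p, q}} \<and> {y, x} \<in> {{q, r'}, {p, r'}, {p, q}}"
        hence "x \<in> {p, q, r'}" "y \<in> {p, q, r'}" "z \<in> {p, q, r'}" by auto
        hence "(x, y, z) = (p, q, r')" using xyz ord by auto
        thus False using False by simp
      qed
      hence "before (A @ {p, q} # {p, r'} # {q, r'} # B) {z, y} {y, x}
           = before (A @ {q, r'} # {p, r'} # {p, q} # B) {z, y} {y, x}"
        by (rule braid_perm3)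
      thus ?thesis using False pl1 pl2 by simp
    qed
    thus ?thesis unfolding sup_char[OF r1 w_def] sup_char[OF r2 act2[folded w_def, symmetric]]
      by auto
  qed
  show ?thesis using r1 r2 act2 t1 eq by (auto simp: w_def)
qed

definition hasF :: "nat list \<Rightarrow> bool" where
  "hasF a \<longleftrightarrow> (\<exists>a' \<in> comm_class a. \<exists>xs ys i. a' = xs @ [i + 1, i, i + 1] @ ys)"

definition hasG :: "nat list \<Rightarrow> bool" where
  "hasG a \<longleftrightarrow> (\<exists>a' \<in> comm_class a. \<exists>xs ys i. a' = xs @ [i, i + 1, i] @ ys)"

lemma hasF_cc: "b \<in> comm_class a \<Longrightarrow> hasF b \<Longrightarrow> hasF a"
  unfolding hasF_def by (meson cc_trans)

lemma hasG_cc: "b \<in> comm_class a \<Longrightarrow> hasG b \<Longrightarrow> hasG a"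
  unfolding hasG_def by (meson cc_trans)

lemma hasF_snoc: "hasF c \<Longrightarrow> hasF (c @ [e])"
proof -
  assume "hasF c"
  then obtain a' xs ys i where "a' \<in> comm_class c" "a' = xs @ [i + 1, i, i + 1] @ ys"
    unfolding hasF_def by blast
  hence "xs @ [i + 1, i, i + 1] @ (ys @ [e]) \<in> comm_class (c @ [e])" using cc_append by fastforce
  thus ?thesis unfolding hasF_def by blast
qed

lemma hasG_snoc: "hasG c \<Longrightarrow> hasG (c @ [e])"
proof -
  assume "hasG c"
  then obtain a' xs ys i where "a' \<in> comm_class c" "a' = xs @ [i, i + 1, i] @ ys"
    unfolding hasG_def by blast
  hence "xs @ [i, i + 1, i] @ (ys @ [e]) \<in> comm_class (c @ [e])" using cc_append by fastforce
  thus ?thesis unfolding hasG_def by blast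
qed

lemma red_snoc:
  assumes "red n (c @ [e])"
  shows "red n c" "1 \<le> e" "e < n" "act c (id_perm n) ! (e - 1) < act c (id_perm n) ! e"
  using assms by (auto simp: red_def)

lemma act_snoc: "act (c @ [e]) u = swap_at e (act c u)" by simp

lemma red_nil_no_desc:
  assumes "1 \<le> d" "d < n"
  shows "\<not> act [] (id_perm n) ! (d - 1) > act [] (id_perm n) ! d"
  using assms by simp

definition Gmin :: "nat list \<Rightarrow> nat \<Rightarrow> bool" where
  "Gmin w d \<longleftrightarrow> 1 \<le> d \<and> d < length w \<and> w ! (d - 1) > w ! d \<and> (\<forall>i < d - 1. w ! i < w ! (d - 1))"

definition Gmax :: "nat list \<Rightarrow> nat \<Rightarrow> bool" where
  "Gmax w d \<longleftrightarrow> 1 \<le> d \<and> d < length w \<and> w ! (d - 1) > w ! d \<and> (\<forall>i. d < i \<and> i < length w \<longrightarrow> w ! d < w ! i)"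

lemma Emin:
  "\<forall>a d. length a = m \<longrightarrow> red n a \<longrightarrow> Gmin (act a (id_perm n)) d \<longrightarrow>
     (\<exists>c. c @ [d] \<in> comm_class a) \<or> hasF a"
proof (induction m rule: less_induct)
  case (less m)
  show ?case
  proof (intro allI impI)
    fix a d assume len: "length a = m" and r: "red n a" and G: "Gmin (act a (id_perm n)) d"
    show "(\<exists>c. c @ [d] \<in> comm_class a) \<or> hasF a"
    proof (cases a rule: rev_exhaust)
      case Nil thus ?thesis using G by (auto simp: Gmin_def)
    next
      case (snoc c e)
      note rs = red_snoc[OF r[unfolded snoc]]
      define v where "v = act c (id_perm n)"
      define w where "w = act a (id_perm n)"
      have lv: "length v = n" by (simp add: v_def)
      have wv: "w = swap_at e v" by (simp add: w_def v_def snoc)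
      have lc: "length c < m" using len snoc by simp
      have asc: "v ! (e - 1) < v ! e" using rs by (simp add: v_def)
      have Gw: "1 \<le> d" "d < n" "w ! (d - 1) > w ! d" "\<And>i. i < d - 1 \<Longrightarrow> w ! i < w ! (d - 1)"
        using G by (auto simp: Gmin_def w_def)
      have wn: "\<And>i. i < n \<Longrightarrow> w ! i = (if i = e - 1 then v ! e else if i = e then v ! (e - 1) else v ! i)"
        using wv swap_nth[of e v] rs lv by simp
      have IH: "\<And>a' d'. length a' < m \<Longrightarrow> red n a' \<Longrightarrow> Gmin (act a' (id_perm n)) d' \<Longrightarrow>
          (\<exists>c. c @ [d'] \<in> comm_class a') \<or> hasF a'" using less by blast
      consider "e = d" | "e + 2 \<le> d \<or> d + 2 \<le> e" | "e + 1 = d" | "e = d + 1" by linarith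
      thus ?thesis
      proof cases
        case 1 thus ?thesis using snoc cc_refl[of "c @ [d]"] by blast
      next
        case 2
        have vw: "v = swap_at e w" using wv swap_swap[of e v] rs lv by simp
        have vn: "\<And>i. i < n \<Longrightarrow> v ! i = (if i = e - 1 then w ! e else if i = e then w ! (e - 1) else w ! i)"
          using vw swap_nth[of e w] rs lv wv by simp
        have "Gmin v d" unfolding Gmin_def
        proof (intro conjI allI impI)
          show "1 \<le> d" "d < length v" using Gw lv by auto
          have ne: "d - 1 \<noteq> e - 1" "d - 1 \<noteq> e" "d \<noteq> e - 1" "d \<noteq> e" using 2 Gw rs by arith+
          have e1: "v ! (d - 1) = w ! (d - 1)" "v ! d = w ! d" using vn[of "d - 1"] vn[of d] Gw ne by auto
          thus "v ! d < v ! (d - 1)" using Gw by simp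
          fix i assume i: "i < d - 1"
          have "v ! i = w ! i \<or> (v ! i = w ! e \<and> e < d - 1) \<or> (v ! i = w ! (e - 1) \<and> e - 1 < d - 1)"
            using vn[of i] i Gw 2 rs by auto
          thus "v ! i < v ! (d - 1)" using Gw(4) i e1 by auto
        qed
        hence "(\<exists>c'. c' @ [d] \<in> comm_class c) \<or> hasF c" using IH[OF lc rs(1)] v_def by simp
        thus ?thesis
        proof
          assume "\<exists>c'. c' @ [d] \<in> comm_class c"
          then obtain c' where "c' @ [d] \<in> comm_class c" by blast
          hence "c' @ [d, e] \<in> comm_class a" using cc_append[of "c' @ [d]" c "[e]"] snoc by simp
          moreover have "c' @ [e, d] \<in> comm_class (c' @ [d, e])" using cc_swap 2 by auto
          ultimately have "(c' @ [e]) @ [d] \<in> comm_class a" using cc_trans by fastforce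
          thus ?thesis by blast
        next
          assume "hasF c" thus ?thesis using hasF_snoc snoc by simp
        qed
      next
        case 3
        have "w ! (e - 1) = v ! e" "w ! e = v ! (e - 1)" using wn[of "e - 1"] wn[of e] rs by auto
        hence x: "w ! (e - 1) > w ! e" using asc by simp
        have "e - 1 < d - 1" "d - 1 = e" using 3 rs by arith+
        hence "w ! (e - 1) < w ! e" using Gw(4) by metis
        thus ?thesis using x by simp
      next
        case 4
        have vn: "v ! (d - 1) = w ! (d - 1)" "v ! d = w ! (d + 1)" "v ! (d + 1) = w ! d"
          using wn 4 Gw lv rs by auto
        have vp: "\<And>i. i < d - 1 \<Longrightarrow> v ! i = w ! i" using wn 4 Gw lv by auto
        have dd: "w ! (d + 1) < w ! d" using asc vn 4 by simp
        have "Gmin v d" unfolding Gmin_def using Gw vn vp dd lv 4 rs by auto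
        hence "(\<exists>c'. c' @ [d] \<in> comm_class c) \<or> hasF c" using IH[OF lc rs(1)] v_def by simp
        thus ?thesis
        proof
          assume "hasF c" thus ?thesis using hasF_snoc snoc by simp
        next
          assume "\<exists>c'. c' @ [d] \<in> comm_class c"
          then obtain c1 where c1: "c1 @ [d] \<in> comm_class c" by blast
          note ci = cc_inv[OF c1 rs(1)]
          have r1: "red n c1" and av: "act (c1 @ [d]) (id_perm n) = v"
            using ci red_snoc by (auto simp: v_def)
          define v' where "v' = act c1 (id_perm n)"
          have lv': "length v' = n" by (simp add: v'_def)
          have vv: "v = swap_at d v'" using av by (simp add: v'_def)
          have v'v: "v' = swap_at d v" using vv swap_swap Gw lv' by simp
          have v'n: "v' ! (d - 1) = w ! (d + 1)" "v' ! d = w ! (d - 1)" "v' ! (d + 1) = w ! d"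
            using v'v swap_nth[of d v] Gw lv vn 4 rs by auto
          have v'p: "\<And>i. i < d - 1 \<Longrightarrow> v' ! i = w ! i" using v'v swap_nth[of d v] Gw lv vp by auto
          have "Gmin v' (d + 1)" unfolding Gmin_def
          proof (intro conjI allI impI)
            show "1 \<le> d + 1" by simp
            show "d + 1 < length v'" using lv' 4 rs by simp
            show "v' ! (d + 1) < v' ! (d + 1 - 1)" using v'n Gw by simp
            fix i assume "i < d + 1 - 1"
            thus "v' ! i < v' ! (d + 1 - 1)"
              using v'n v'p Gw dd by (cases "i = d - 1") auto
          qed
          moreover have lc1: "length c1 < m"
          proof -
            have "red n (c1 @ [d])" using ci by blast
            hence "length (c1 @ [d]) = inv_count (act (c1 @ [d]) (id_perm n))" unfolding red_iff by simp
            also have "\<dots> = inv_count (act c (id_perm n))" using ci by metis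
            also have "\<dots> = length c" using rs(1) by (simp add: red_iff)
            finally show ?thesis using lc by simp
          qed
          ultimately have "(\<exists>c'. c' @ [d + 1] \<in> comm_class c1) \<or> hasF c1"
            using IH r1 v'_def by blast
          thus ?thesis
          proof
            assume "hasF c1"
            hence "hasF (c1 @ [d])" by (rule hasF_snoc)
            hence "hasF c" using hasF_cc c1 by blast
            thus ?thesis using hasF_snoc snoc by simp
          next
            assume "\<exists>c'. c' @ [d + 1] \<in> comm_class c1"
            then obtain c2 where "c2 @ [d + 1] \<in> comm_class c1" by blast
            hence "c2 @ [d + 1, d] \<in> comm_class (c1 @ [d])" using cc_append by fastforce
            hence "c2 @ [d + 1, d] \<in> comm_class c" using c1 cc_trans by blast
            hence "c2 @ [d + 1, d, d + 1] \<in> comm_class a" using cc_append[of _ c "[d + 1]"] snoc 4 by fastforce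
            hence "c2 @ [d + 1, d, d + 1] @ [] \<in> comm_class a" by simp
            thus ?thesis unfolding hasF_def by blast
          qed
        qed
      qed
    qed
  qed
qed

lemma Emax:
  "\<forall>a d. length a = m \<longrightarrow> red n a \<longrightarrow> Gmax (act a (id_perm n)) d \<longrightarrow>
     (\<exists>c. c @ [d] \<in> comm_class a) \<or> hasG a"
proof (induction m rule: less_induct)
  case (less m)
  show ?case
  proof (intro allI impI)
    fix a d assume len: "length a = m" and r: "red n a" and G: "Gmax (act a (id_perm n)) d"
    show "(\<exists>c. c @ [d] \<in> comm_class a) \<or> hasG a"
    proof (cases a rule: rev_exhaust)
      case Nil thus ?thesis using G by (auto simp: Gmax_def)
    next
      case (snoc c e)
      note rs = red_snoc[OF r[unfolded snoc]]
      define v where "v = act c (id_perm n)"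
      define w where "w = act a (id_perm n)"
      have lv: "length v = n" by (simp add: v_def)
      have wv: "w = swap_at e v" by (simp add: w_def v_def snoc)
      have lc: "length c < m" using len snoc by simp
      have asc: "v ! (e - 1) < v ! e" using rs by (simp add: v_def)
      have Gw: "1 \<le> d" "d < n" "w ! (d - 1) > w ! d" "\<And>i. d < i \<Longrightarrow> i < n \<Longrightarrow> w ! d < w ! i"
        using G by (auto simp: Gmax_def w_def)
      have vw: "v = swap_at e w" using wv swap_swap[of e v] rs lv by simp
      have vn: "\<And>i. i < n \<Longrightarrow> v ! i = (if i = e - 1 then w ! e else if i = e then w ! (e - 1) else w ! i)"
        using vw swap_nth[of e w] rs lv wv by simp
      have IH: "\<And>a' d'. length a' < m \<Longrightarrow> red n a' \<Longrightarrow> Gmax (act a' (id_perm n)) d' \<Longrightarrow>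
          (\<exists>c. c @ [d'] \<in> comm_class a') \<or> hasG a'" using less by blast
      consider "e = d" | "e + 2 \<le> d \<or> d + 2 \<le> e" | "e + 1 = d" | "e = d + 1" by linarith
      thus ?thesis
      proof cases
        case 1 thus ?thesis using snoc cc_refl[of "c @ [d]"] by blast
      next
        case 2
        have "Gmax v d" unfolding Gmax_def
        proof (intro conjI allI impI)
          show "1 \<le> d" "d < length v" using Gw lv by auto
          have ne: "d - 1 \<noteq> e - 1" "d - 1 \<noteq> e" "d \<noteq> e - 1" "d \<noteq> e" using 2 Gw rs by arith+
          have e1: "v ! (d - 1) = w ! (d - 1)" "v ! d = w ! d" using vn[of "d - 1"] vn[of d] Gw ne by auto
          thus "v ! d < v ! (d - 1)" using Gw by simp
          fix i assume i: "d < i \<and> i < length v"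
          have "v ! i = w ! i \<or> (v ! i = w ! e \<and> d < e) \<or> (v ! i = w ! (e - 1) \<and> d < e - 1)"
            using vn[of i] i Gw 2 rs lv by auto
          thus "v ! d < v ! i" using Gw(4) i e1 rs lv by auto
        qed
        hence "(\<exists>c'. c' @ [d] \<in> comm_class c) \<or> hasG c" using IH[OF lc rs(1)] v_def by simp
        thus ?thesis
        proof
          assume "\<exists>c'. c' @ [d] \<in> comm_class c"
          then obtain c' where "c' @ [d] \<in> comm_class c" by blast
          hence "c' @ [d, e] \<in> comm_class a" using cc_append[of "c' @ [d]" c "[e]"] snoc by simp
          moreover have "c' @ [e, d] \<in> comm_class (c' @ [d, e])" using cc_swap 2 by auto
          ultimately have "(c' @ [e]) @ [d] \<in> comm_class a" using cc_trans by fastforce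
          thus ?thesis by blast
        next
          assume "hasG c" thus ?thesis using hasG_snoc snoc by simp
        qed
      next
        case 4
        have "w ! (e - 1) = v ! e" "w ! e = v ! (e - 1)" using vn[of "e - 1"] vn[of e] rs by auto
        hence x: "w ! (e - 1) > w ! e" using asc by simp
        have "e - 1 = d" "d < e" "e < n" using 4 rs by arith+
        hence "w ! (e - 1) < w ! e" using Gw(4) by metis
        thus ?thesis using x by simp
      next
        case 3
        have d2: "2 \<le> d" using 3 rs by arith
        have vn3: "v ! (d - 2) = w ! (d - 1)" "v ! (d - 1) = w ! (d - 2)" "v ! d = w ! d"
          using vn[of "d - 2"] vn[of "d - 1"] vn[of d] 3 Gw d2 by auto
        have vp: "\<And>i. d < i \<Longrightarrow> i < n \<Longrightarrow> v ! i = w ! i" using vn 3 by auto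
        have dd: "w ! (d - 1) < w ! (d - 2)" using asc vn3 3
          by (metis add_diff_cancel_right' diff_diff_left one_add_one)
        have "Gmax v d" unfolding Gmax_def using Gw vn3 vp dd lv by auto
        hence "(\<exists>c'. c' @ [d] \<in> comm_class c) \<or> hasG c" using IH[OF lc rs(1)] v_def by simp
        thus ?thesis
        proof
          assume "hasG c" thus ?thesis using hasG_snoc snoc by simp
        next
          assume "\<exists>c'. c' @ [d] \<in> comm_class c"
          then obtain c1 where c1: "c1 @ [d] \<in> comm_class c" by blast
          note ci = cc_inv[OF c1 rs(1)]
          have r1: "red n c1" and av: "act (c1 @ [d]) (id_perm n) = v"
            using ci red_snoc by (auto simp: v_def)
          define v' where "v' = act c1 (id_perm n)"
          have lv': "length v' = n" by (simp add: v'_def)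
          have vv: "v = swap_at d v'" using av by (simp add: v'_def)
          have v'v: "v' = swap_at d v" using vv swap_swap Gw lv' by simp
          have v'n: "v' ! (d - 2) = w ! (d - 1)" "v' ! (d - 1) = w ! d" "v' ! d = w ! (d - 2)"
            using v'v swap_nth[of d v] Gw lv vn3 d2 by auto
          have v'p: "\<And>i. d < i \<Longrightarrow> i < n \<Longrightarrow> v' ! i = w ! i" using v'v swap_nth[of d v] Gw lv vp by auto
          have "Gmax v' (d - 1)" unfolding Gmax_def
          proof (intro conjI allI impI)
            show "1 \<le> d - 1" using d2 by simp
            show "d - 1 < length v'" using lv' Gw by simp
            have "d - 1 - 1 = d - 2" by simp
            thus "v' ! (d - 1) < v' ! (d - 1 - 1)" using v'n Gw by simp
            fix i assume "d - 1 < i \<and> i < length v'"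
            thus "v' ! (d - 1) < v' ! i"
              using v'n v'p Gw dd lv' by (cases "i = d") auto
          qed
          moreover have lc1: "length c1 < m"
          proof -
            have "red n (c1 @ [d])" using ci by blast
            hence "length (c1 @ [d]) = inv_count (act (c1 @ [d]) (id_perm n))" unfolding red_iff by simp
            also have "\<dots> = inv_count (act c (id_perm n))" using ci by metis
            also have "\<dots> = length c" using rs(1) by (simp add: red_iff)
            finally show ?thesis using lc by simp
          qed
          ultimately have "(\<exists>c'. c' @ [d - 1] \<in> comm_class c1) \<or> hasG c1"
            using IH r1 v'_def by blast
          thus ?thesis
          proof
            assume "hasG c1"
            hence "hasG (c1 @ [d])" by (rule hasG_snoc)
            hence "hasG c" using hasG_cc c1 by blast
            thus ?thesis using hasG_snoc snoc by simp
          next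
            assume "\<exists>c'. c' @ [d - 1] \<in> comm_class c1"
            then obtain c2 where "c2 @ [d - 1] \<in> comm_class c1" by blast
            hence "c2 @ [d - 1, d] \<in> comm_class (c1 @ [d])" using cc_append by fastforce
            hence "c2 @ [d - 1, d] \<in> comm_class c" using c1 cc_trans by blast
            hence "c2 @ [d - 1, d, d - 1] \<in> comm_class a" using cc_append[of _ c "[d - 1]"] snoc 3 by fastforce
            moreover have "[d - 1, d, d - 1] = [d - 1, (d - 1) + 1, d - 1]" using Gw by simp
            ultimately have "c2 @ [d - 1, (d - 1) + 1, d - 1] @ [] \<in> comm_class a" by simp
            thus ?thesis unfolding hasG_def by blast
          qed
        qed
      qed
    qed
  qed
qed

lemma chain_up:
  fixes f :: "nat \<Rightarrow> nat"
  assumes "\<And>j. L < j \<Longrightarrow> j \<le> D \<Longrightarrow> f (j - 1) < f j"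
  shows "L \<le> i \<Longrightarrow> i < k \<Longrightarrow> k \<le> D \<Longrightarrow> f i < f k"
proof (induction k)
  case 0 thus ?case by simp
next
  case (Suc k)
  have s: "f k < f (Suc k)" using assms[of "Suc k"] Suc.prems by simp
  show ?case
  proof (cases "i = k")
    case True thus ?thesis using s by simp
  next
    case False thus ?thesis using Suc s by simp
  qed
qed

lemma finite_Des[simp]: "finite (Des w)"
  by (rule finite_subset[of _ "{..<length w}"]) (auto simp: Des_def)

lemma desc_last:
  assumes "red n (c @ [e])"
  shows "e \<in> Des (act (c @ [e]) (id_perm n))"
proof -
  note rs = red_snoc[OF assms]
  define v where "v = act c (id_perm n)"
  have lv: "length v = n" by (simp add: v_def)
  have "act (c @ [e]) (id_perm n) ! (e - 1) = v ! e" "act (c @ [e]) (id_perm n) ! e = v ! (e - 1)"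
    using swap_nth[of e v] rs lv by (auto simp: v_def)
  thus ?thesis using rs lv by (auto simp: Des_def v_def)
qed

lemma red_distinct: "red n a \<Longrightarrow> distinct (act a (id_perm n))"
  using distinct_act[of "id_perm n" a] by (simp add: red_def)

lemma a_min_step:
  assumes "inv_count w = Suc (inv_count (swap_at (Min (Des w)) w))"
  shows "a_min w = a_min (swap_at (Min (Des w)) w) @ [Min (Des w)]"
  unfolding a_min_def using assms by (simp add: Let_def)

lemma a_max_step:
  assumes "inv_count w = Suc (inv_count (swap_at (Max (Des w)) w))"
  shows "a_max w = a_max (swap_at (Max (Des w)) w) @ [Max (Des w)]"
  unfolding a_max_def using assms by (simp add: Let_def)

lemma peel:
  assumes ca: "c' @ [d] \<in> comm_class a" and r: "red n a" and d: "1 \<le> d" "d < n"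
  shows "red n c'" "act c' (id_perm n) = swap_at d (act a (id_perm n))"
    "length c' < length a" "inv_count (act a (id_perm n)) = Suc (inv_count (swap_at d (act a (id_perm n))))"
proof -
  note ci = cc_inv[OF ca r]
  have rc: "red n (c' @ [d])" using ci by blast
  thus r': "red n c'" using red_snoc by blast
  have ae: "act (c' @ [d]) (id_perm n) = act a (id_perm n)" using ci by blast
  hence "swap_at d (act c' (id_perm n)) = act a (id_perm n)" by simp
  hence "swap_at d (swap_at d (act c' (id_perm n))) = swap_at d (act a (id_perm n))" by simp
  thus ac: "act c' (id_perm n) = swap_at d (act a (id_perm n))" using swap_swap[of d "act c' (id_perm n)"] d by simp
  have "length (c' @ [d]) = inv_count (act (c' @ [d]) (id_perm n))" using rc unfolding red_iff by simp
  also have "\<dots> = inv_count (act a (id_perm n))" using ae by simp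
  also have "\<dots> = length a" using r by (simp add: red_iff)
  finally have la: "length a = Suc (length c')" by simp
  thus "length c' < length a" by simp
  have "inv_count (act c' (id_perm n)) = length c'" using r' by (simp add: red_iff)
  thus "inv_count (act a (id_perm n)) = Suc (inv_count (swap_at d (act a (id_perm n))))"
    using la r ac by (simp add: red_iff)
qed

lemma Mmin:
  "\<forall>a. length a = m \<longrightarrow> red n a \<longrightarrow> a \<notin> comm_class (a_min (act a (id_perm n))) \<longrightarrow> hasF a"
proof (induction m rule: less_induct)
  case (less m)
  show ?case
  proof (intro allI impI)
    fix a assume len: "length a = m" and r: "red n a" and na: "a \<notin> comm_class (a_min (act a (id_perm n)))"
    define w where "w = act a (id_perm n)"
    have lw: "length w = n" by (simp add: w_def)
    have dw: "distinct w" using red_distinct[OF r] by (simp add: w_def)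
    show "hasF a"
    proof (cases a rule: rev_exhaust)
      case Nil thus ?thesis using na by (simp add: a_min_def)
    next
      case (snoc c e)
      have eD: "e \<in> Des w" using desc_last r snoc by (simp add: w_def)
      define d where "d = Min (Des w)"
      have dD: "d \<in> Des w" using eD d_def by (metis Min_in finite_Des empty_iff)
      have dmin: "\<And>j. j \<in> Des w \<Longrightarrow> d \<le> j" using d_def by simp
      have dd: "1 \<le> d" "d < n" "w ! (d - 1) > w ! d" using dD lw by (auto simp: Des_def)
      have inc: "w ! (j - 1) < w ! j" if "0 < j" "j \<le> d - 1" for j
      proof -
        have "j \<notin> Des w" using dmin[of j] that by fastforce
        moreover have "w ! (j - 1) \<noteq> w ! j" using dw that dd lw by (simp add: nth_eq_iff_index_eq)
        ultimately show ?thesis using that dd lw by (auto simp: Des_def)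
      qed
      have "Gmin w d" unfolding Gmin_def using dd lw chain_up[of 0 "d - 1" "\<lambda>i. w ! i", OF inc] by auto
      hence "(\<exists>c. c @ [d] \<in> comm_class a) \<or> hasF a" using Emin r w_def by blast
      thus ?thesis
      proof
        assume "\<exists>c. c @ [d] \<in> comm_class a"
        then obtain c' where ca: "c' @ [d] \<in> comm_class a" by blast
        note pe = peel[OF ca r dd(1,2)]
        have "c' \<in> comm_class (a_min (act c' (id_perm n))) \<or> hasF c'"
          using less pe len by blast
        thus ?thesis
        proof
          assume "hasF c'" thus ?thesis using hasF_snoc hasF_cc ca by blast
        next
          assume "c' \<in> comm_class (a_min (act c' (id_perm n)))"
          hence "c' @ [d] \<in> comm_class (a_min (swap_at d w) @ [d])" using pe cc_append w_def by simp
          moreover have "a_min w = a_min (swap_at d w) @ [d]"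
            using a_min_step pe(4) d_def w_def by simp
          ultimately have "a \<in> comm_class (a_min w)" using cc_sym[OF ca] cc_trans by metis
          thus ?thesis using na w_def by simp
        qed
      qed simp
    qed
  qed
qed

lemma Mmax:
  "\<forall>a. length a = m \<longrightarrow> red n a \<longrightarrow> a \<notin> comm_class (a_max (act a (id_perm n))) \<longrightarrow> hasG a"
proof (induction m rule: less_induct)
  case (less m)
  show ?case
  proof (intro allI impI)
    fix a assume len: "length a = m" and r: "red n a" and na: "a \<notin> comm_class (a_max (act a (id_perm n)))"
    define w where "w = act a (id_perm n)"
    have lw: "length w = n" by (simp add: w_def)
    have dw: "distinct w" using red_distinct[OF r] by (simp add: w_def)
    show "hasG a"
    proof (cases a rule: rev_exhaust)
      case Nil thus ?thesis using na by (simp add: a_max_def)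
    next
      case (snoc c e)
      have eD: "e \<in> Des w" using desc_last r snoc by (simp add: w_def)
      define d where "d = Max (Des w)"
      have dD: "d \<in> Des w" using eD d_def by (metis Max_in finite_Des empty_iff)
      have dmax: "\<And>j. j \<in> Des w \<Longrightarrow> j \<le> d" using d_def by simp
      have dd: "1 \<le> d" "d < n" "w ! (d - 1) > w ! d" using dD lw by (auto simp: Des_def)
      have inc: "w ! (j - 1) < w ! j" if "d < j" "j \<le> n - 1" for j
      proof -
        have "j \<notin> Des w" using dmax[of j] that by fastforce
        moreover have "w ! (j - 1) \<noteq> w ! j" using dw that dd lw by (simp add: nth_eq_iff_index_eq)
        ultimately show ?thesis using that dd lw by (auto simp: Des_def)
      qed
      have "Gmax w d" unfolding Gmax_def using dd lw chain_up[of d "n - 1" "\<lambda>i. w ! i", OF inc] by auto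
      hence "(\<exists>c. c @ [d] \<in> comm_class a) \<or> hasG a" using Emax r w_def by blast
      thus ?thesis
      proof
        assume "\<exists>c. c @ [d] \<in> comm_class a"
        then obtain c' where ca: "c' @ [d] \<in> comm_class a" by blast
        note pe = peel[OF ca r dd(1,2)]
        have "c' \<in> comm_class (a_max (act c' (id_perm n))) \<or> hasG c'"
          using less pe len by blast
        thus ?thesis
        proof
          assume "hasG c'" thus ?thesis using hasG_snoc hasG_cc ca by blast
        next
          assume "c' \<in> comm_class (a_max (act c' (id_perm n)))"
          hence "c' @ [d] \<in> comm_class (a_max (swap_at d w) @ [d])" using pe cc_append w_def by simp
          moreover have "a_max w = a_max (swap_at d w) @ [d]"
            using a_max_step pe(4) d_def w_def by simp
          ultimately have "a \<in> comm_class (a_max w)" using cc_sym[OF ca] cc_trans by metis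
          thus ?thesis using na w_def by simp
        qed
      qed simp
    qed
  qed
qed

theorem mainTheorem6:
  fixes n :: nat and w a :: "nat list"
  assumes "is_perm n w"
    and "a \<in> reduced_words w"
  shows "(a \<notin> comm_class (a_min w) \<longrightarrow>
           (\<exists>b \<in> reduced_words w. adjacent_classes b a \<and> sup_set w b \<subset> sup_set w a))
       \<and> (a \<notin> comm_class (a_max w) \<longrightarrow>
           (\<exists>b \<in> reduced_words w. adjacent_classes b a \<and> sup_set w a \<subset> sup_set w b))"
proof -
  have lw: "length w = n" using assms(1) by (simp add: is_perm_def)
  have ra: "red n a" and aw: "act a (id_perm n) = w" using assms(2) R_iff[OF lw] by auto
  have part1: "\<exists>b \<in> reduced_words w. adjacent_classes b a \<and> sup_set w b \<subset> sup_set w a"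
    if na: "a \<notin> comm_class (a_min w)"
  proof -
    have "hasF a" using Mmin ra na aw by blast
    then obtain a' xs ys i where a'c: "a' \<in> comm_class a" and a'e: "a' = xs @ [i + 1, i, i + 1] @ ys"
      unfolding hasF_def by blast
    note ci = cc_inv[OF a'c ra]
    define b where "b = xs @ [i, i + 1, i] @ ys"
    have ra': "red n a'" and a'w: "act a' (id_perm n) = w" and sa': "sup_set w a' = sup_set w a"
      using ci aw by auto
    note bi = braid_inv[OF a'e b_def, of n]
    have rb: "red n b" and bw: "act b (id_perm n) = w" using bi ra' a'w by auto
    obtain t where t: "t \<in> sup_set w a'" "sup_set w b = sup_set w a' - {t}" using bi ra' a'w by auto
    have sub: "sup_set w b \<subset> sup_set w a" using t sa' by auto
    have "comm_class b \<noteq> comm_class a"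
    proof
      assume "comm_class b = comm_class a"
      hence "a \<in> comm_class b" using cc_refl by metis
      hence "sup_set w a = sup_set w b" using cc_inv[OF _ rb] bw by metis
      thus False using sub by simp
    qed
    moreover have "braid_step b a'" unfolding braid_step_def b_def a'e by blast
    ultimately have "adjacent_classes b a" unfolding adjacent_classes_def using a'c cc_refl by blast
    moreover have "b \<in> reduced_words w" using R_iff[OF lw] rb bw by simp
    ultimately show ?thesis using sub by blast
  qed
  have part2: "\<exists>b \<in> reduced_words w. adjacent_classes b a \<and> sup_set w a \<subset> sup_set w b"
    if na: "a \<notin> comm_class (a_max w)"
  proof -
    have "hasG a" using Mmax ra na aw by blast
    then obtain a' xs ys i where a'c: "a' \<in> comm_class a" and a'e: "a' = xs @ [i, i + 1, i] @ ys"
      unfolding hasG_def by blast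
    note ci = cc_inv[OF a'c ra]
    define b where "b = xs @ [i + 1, i, i + 1] @ ys"
    have ra': "red n a'" and a'w: "act a' (id_perm n) = w" and sa': "sup_set w a' = sup_set w a"
      using ci aw by auto
    note bi = braid_inv[OF b_def a'e, of n]
    have rb: "red n b" and bw: "act b (id_perm n) = w" using bi ra' a'w by auto
    obtain t where t: "t \<in> sup_set w b" "sup_set w a' = sup_set w b - {t}" using bi ra' a'w bw by auto
    have sub: "sup_set w a \<subset> sup_set w b" using t sa' by auto
    have "comm_class b \<noteq> comm_class a"
    proof
      assume "comm_class b = comm_class a"
      hence "a \<in> comm_class b" using cc_refl by metis
      hence "sup_set w a = sup_set w b" using cc_inv[OF _ rb] bw by metis
      thus False using sub by simp
    qed
    moreover have "braid_step b a'" unfolding braid_step_def b_def a'e by blast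
    ultimately have "adjacent_classes b a" unfolding adjacent_classes_def using a'c cc_refl by blast
    moreover have "b \<in> reduced_words w" using R_iff[OF lw] rb bw by simp
    ultimately show ?thesis using sub by blast
  qed
  show ?thesis using part1 part2 by blast
qed

end
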